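(* Consider a sequence of problems indexed by $n$ with a fixed integer $m\ge1$, a support set $\mathcal{S}\subseteq\{1,\dots,n\}$ of size $s=s(n)$, and a mean $\theta_1=\theta_1(n)>0$. For each $i\in\{1,\dots,n\}$ one observes $2m$ observations $y_{i,1},\dots,y_{i,2m}$, all mutually independent, with $y_{i,j}\sim\mathcal{N}(0,1)$ if $i\notin\mathcal{S}$ and $y_{i,j}\sim\mathcal{N}(\theta_1,1)$ if $i\in\mathcal{S}$. Let $T_{i,2m}=\frac{1}{2m}\sum_{j=1}^{2m}y_{i,j}$ and, for a threshold $\tau$, let $\mathcal{S}_\tau=\{i:T_{i,2m}>\tau\}$ and $\mathcal{E}_\tau=\{\mathcal{S}_\tau\neq\mathcal{S}\}$. If $\theta_1<\sqrt{\frac{\log(n-s)}{m}}$, then the non-sequential procedure is unreliable; specifically, $\min_\tau\mathbb{P}(\mathcal{E}_\tau)\ge 1/2$ in the limit $n\to\infty$.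
   Context: A support estimator $\widehat{\mathcal{S}}(n)$ is unreliable if $\lim_{n\to\infty}\mathbb{P}(\widehat{\mathcal{S}}(n)\neq\mathcal{S}(n))>0$. The inequality on $\theta_1$ is understood as a condition on the growth of $\theta_1(n)$ with $n$. *)

theory Defs
  imports "HOL-Probability.Probability"
begin

definition obs_model :: "nat \<Rightarrow> nat set \<Rightarrow> real \<Rightarrow> nat \<Rightarrow> (nat \<times> nat \<Rightarrow> real) measure" where
  "obs_model m S \<theta> n =
     (\<Pi>\<^sub>M ij \<in> {1..n} \<times> {1..2*m}.
        density lborel (normal_density (if fst ij \<in> S then \<theta> else 0) 1))"

definition avg_stat :: "nat \<Rightarrow> (nat \<times> nat \<Rightarrow> real) \<Rightarrow> nat \<Rightarrow> real" where
  "avg_stat m y i = (1 / (2 * real m)) * (\<Sum>j = 1..2*m. y (i, j))"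

definition thresh_support :: "nat \<Rightarrow> nat \<Rightarrow> real \<Rightarrow> (nat \<times> nat \<Rightarrow> real) \<Rightarrow> nat set" where
  "thresh_support m n \<tau> y = {i \<in> {1..n}. avg_stat m y i > \<tau>}"

definition err_prob :: "nat \<Rightarrow> nat set \<Rightarrow> real \<Rightarrow> nat \<Rightarrow> real \<Rightarrow> real" where
  "err_prob m S \<theta> n \<tau> =
     measure (obs_model m S \<theta> n)
       {y \<in> space (obs_model m S \<theta> n). thresh_support m n \<tau> y \<noteq> S}"

end

theory Submission
  imports Defs
begin


definition "Gm = density lborel std_normal_density"

lemma Gm_prob: "prob_space Gm"
  unfolding Gm_def by (rule prob_space_normal_density) simp

lemma space_Gm[simp]: "space Gm = UNIV" by (simp add: Gm_def)
lemma sets_Gm[simp]: "sets Gm = sets borel" by (simp add: Gm_def)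

lemma Gm_emeasure: "A \<in> sets borel \<Longrightarrow> emeasure Gm A = (\<integral>\<^sup>+x. ennreal (std_normal_density x) * indicator A x \<partial>lborel)"
  unfolding Gm_def by (rule emeasure_density) simp_all

lemma phi_le1: "std_normal_density x \<le> 1"
proof -
  have "exp (- x\<^sup>2 / 2) \<le> 1" by simp
  moreover have "1 / sqrt (2 * pi) \<le> 1" using pi_gt3 by (simp add: divide_le_eq)
  ultimately have "(1 / sqrt (2 * pi)) * exp (- x\<^sup>2 / 2) \<le> 1 * 1"
    by (intro mult_mono) auto
  then show ?thesis by (simp add: std_normal_density_def)
qed

lemma Gm_Ioc_lower:
  assumes ab: "a \<le> b" and k: "\<And>z. a \<le> z \<Longrightarrow> z \<le> b \<Longrightarrow> k \<le> std_normal_density z" and k0: "k \<ge> 0"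
  shows "k * (b - a) \<le> measure Gm {a<..b}"
proof -
  have "ennreal (k * (b - a)) = (\<integral>\<^sup>+x. ennreal k * indicator {a<..b} x \<partial>lborel)"
    using ab k0 by (simp add: nn_integral_cmult_indicator ennreal_mult)
  also have "\<dots> \<le> (\<integral>\<^sup>+x. ennreal (std_normal_density x) * indicator {a<..b} x \<partial>lborel)"
    by (rule nn_integral_mono) (auto simp: indicator_def intro: k)
  also have "\<dots> = emeasure Gm {a<..b}" by (simp add: Gm_emeasure)
  finally have "ennreal (k * (b - a)) \<le> emeasure Gm {a<..b}" .
  moreover have "emeasure Gm {a<..b} = ennreal (measure Gm {a<..b})"
    using finite_measure.emeasure_eq_measure[OF prob_space.axioms(1)[OF Gm_prob]] by blast
  ultimately show ?thesis using ab k0 by (simp add: ennreal_le_iff)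
qed

lemma Gm_Ioc_upper:
  assumes ab: "a \<le> b"
  shows "measure Gm {a<..b} \<le> b - a"
proof -
  have "emeasure Gm {a<..b} = (\<integral>\<^sup>+x. ennreal (std_normal_density x) * indicator {a<..b} x \<partial>lborel)"
    by (simp add: Gm_emeasure)
  also have "\<dots> \<le> (\<integral>\<^sup>+x. ennreal 1 * indicator {a<..b} x \<partial>lborel)"
    by (rule nn_integral_mono) (auto simp: indicator_def phi_le1)
  also have "\<dots> = ennreal (b - a)"
    using ab by (simp add: nn_integral_cmult_indicator)
  finally have "emeasure Gm {a<..b} \<le> ennreal (b - a)" .
  moreover have "emeasure Gm {a<..b} = ennreal (measure Gm {a<..b})"
    using finite_measure.emeasure_eq_measure[OF prob_space.axioms(1)[OF Gm_prob]] by blast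
  ultimately show ?thesis using ab by (simp add: ennreal_le_iff)
qed

lemma Gm_sym: "measure Gm {..<0} = measure Gm {0<..}"
proof -
  interpret prob_space Gm by (rule Gm_prob)
  have d: "distributed Gm lborel (\<lambda>x. x) std_normal_density"
    unfolding distributed_def by (simp add: Gm_def distr_id2)
  have d2: "distributed Gm lborel (\<lambda>x. 0 + (-1) * x) (normal_density (0 + (-1) * 0) (\<bar>-1\<bar> * 1))"
    by (rule normal_density_affine[OF d]) simp_all
  then have d3: "distributed Gm lborel (\<lambda>x. - x) std_normal_density" by simp
  have "emeasure Gm ((\<lambda>x. - x) -` {0<..} \<inter> space Gm) = emeasure Gm {0<..}"
    using distributed_emeasure[OF d3, of "{0<..}"] by (simp add: Gm_emeasure)
  moreover have "(\<lambda>x::real. - x) -` {0<..} \<inter> space Gm = {..<0}" by auto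
  ultimately have "emeasure Gm {..<0} = emeasure Gm {0<..}" by simp
  then show ?thesis by (simp add: measure_def)
qed

lemma Gm_compl: "measure Gm {..x} + measure Gm {x<..} = 1"
proof -
  interpret prob_space Gm by (rule Gm_prob)
  have "prob (space Gm - {..x}) = 1 - prob {..x}" by (rule prob_compl) simp
  moreover have "space Gm - {..x} = {x<..}" by auto
  ultimately show ?thesis by simp
qed

lemma Gm_compl2: "measure Gm {..<x} + measure Gm {x..} = 1"
proof -
  interpret prob_space Gm by (rule Gm_prob)
  have "prob (space Gm - {..<x}) = 1 - prob {..<x}" by (rule prob_compl) simp
  moreover have "space Gm - {..<x} = {x..}" by auto
  ultimately show ?thesis by simp
qed

lemma Gm_mono: "A \<subseteq> B \<Longrightarrow> B \<in> sets borel \<Longrightarrow> measure Gm A \<le> measure Gm B"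
  by (rule finite_measure.finite_measure_mono[OF prob_space.axioms(1)[OF Gm_prob]]) simp_all

lemma Gm_nonneg: "0 \<le> measure Gm A" by simp
lemma Gm_le1: "measure Gm A \<le> 1"
  using prob_space.prob_le_1[OF Gm_prob] .

lemma Gm_half1: "measure Gm {..0} \<ge> 1/2"
proof -
  have "measure Gm {..0} + measure Gm {0<..} = 1" by (rule Gm_compl)
  moreover have "measure Gm {0<..} = measure Gm {..<0}" using Gm_sym by simp
  moreover have "measure Gm {..<0} \<le> measure Gm {..0}" by (rule Gm_mono) auto
  ultimately show ?thesis by linarith
qed

lemma Gm_half2: "measure Gm {0..} \<ge> 1/2"
proof -
  have "measure Gm {..<0} + measure Gm {0..} = 1" by (rule Gm_compl2)
  moreover have "measure Gm {0<..} \<le> measure Gm {0..}" by (rule Gm_mono) auto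
  ultimately show ?thesis using Gm_sym by linarith
qed


lemma F_mono: "x \<le> y \<Longrightarrow> measure Gm {..x} \<le> measure Gm {..y}"
  by (rule Gm_mono) auto

lemma Q_mono: "x \<le> y \<Longrightarrow> measure Gm {y<..} \<le> measure Gm {x<..}"
  by (rule Gm_mono) auto

lemma F_neg: "x < 0 \<Longrightarrow> measure Gm {..x} \<le> 1/2"
proof -
  assume "x < 0"
  then have "measure Gm {..x} \<le> measure Gm {..<0}" by (intro Gm_mono) auto
  moreover have "measure Gm {..<0} + measure Gm {0..} = 1" by (rule Gm_compl2)
  ultimately show ?thesis using Gm_half2 by linarith
qed

lemma F_minus_c: "c \<ge> 0 \<Longrightarrow> measure Gm {..-c} \<ge> 1/2 - c"
proof -
  assume c: "c \<ge> 0"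
  interpret prob_space Gm by (rule Gm_prob)
  have "{..0::real} = {..-c} \<union> {-c<..0}" using c by auto
  then have "measure Gm {..0} \<le> measure Gm {..-c} + measure Gm {-c<..0}"
    using measure_Un_le[of "{..-c}" Gm "{-c<..0}"] by simp
  moreover have "measure Gm {-c<..0} \<le> 0 - (-c)" using c by (intro Gm_Ioc_upper) simp
  ultimately show ?thesis using Gm_half1 by linarith
qed

lemma phi_ge: "z\<^sup>2 \<le> K\<^sup>2 \<Longrightarrow> std_normal_density K \<le> std_normal_density z"
  unfolding std_normal_density_def by (intro mult_left_mono) auto

lemma phi_pos: "std_normal_density z > 0"
  unfolding std_normal_density_def by simp

lemma pow_half:
  fixes q :: real
  assumes q0: "0 \<le> q" and q1: "q \<le> 1" and Nq: "real N * q \<ge> 1"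
  shows "(1 - q) ^ N \<le> 1/2"
proof -
  have "(1 - q) ^ N \<le> (exp (-q)) ^ N"
    using q1 by (intro power_mono) (auto simp: exp_ge_add_one_self[of "-q", simplified] intro: order_trans[OF _ exp_ge_add_one_self])
  also have "\<dots> = exp (- (real N * q))" by (simp add: exp_of_nat_mult[symmetric])
  also have "\<dots> \<le> exp (-1)" using Nq by simp
  also have "exp (-1::real) \<le> 1/2"
  proof -
    have "exp (1/2::real) \<ge> 3/2" using exp_ge_add_one_self[of "1/2::real"] by simp
    then have "exp (1/2::real) * exp (1/2) \<ge> 3/2 * (3/2)" by (intro mult_mono) auto
    then have "exp (1::real) \<ge> 2" by (simp add: mult_exp_exp)
    then show ?thesis by (simp add: exp_minus field_simps)
  qed
  finally show ?thesis .
qed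


lemma core:
  fixes c :: real and m :: nat
  assumes c: "c > 0" and m1: "m \<ge> 1"
  shows "\<exists>n0. \<forall>n N s \<theta> \<tau> E. n \<ge> n0 \<longrightarrow> n = N + s \<longrightarrow> \<theta> > 0 \<longrightarrow> \<theta> < sqrt (ln (real N) / real m) \<longrightarrow>
     E \<ge> measure Gm {..(\<tau> - \<theta>) * sqrt (2*m)} \<longrightarrow> E \<ge> 1 - (measure Gm {..\<tau> * sqrt (2*m)})^N \<longrightarrow>
     E \<ge> 1 - (measure Gm {(\<tau> - \<theta>) * sqrt (2*m)<..})^s \<longrightarrow> E \<ge> 1/2 - c"
proof -
  define L0 where "L0 = max c ((2/c) * (c\<^sup>2/8 + \<bar>ln (6/c)\<bar>))"
  define N0 where "N0 = nat \<lceil>exp (L0\<^sup>2/2)\<rceil> + 2"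
  define A0 where "A0 = sqrt (2 * ln (real N0))"
  define p0 where "p0 = std_normal_density (A0 + 1)"
  define S0 where "S0 = nat \<lceil>1/p0\<rceil>"
  have L0c: "L0 \<ge> c" by (simp add: L0_def)
  have L0b: "L0 \<ge> (2/c) * (c\<^sup>2/8 + \<bar>ln (6/c)\<bar>)" by (simp add: L0_def)
  have N0ge: "real N0 \<ge> exp (L0\<^sup>2/2)" unfolding N0_def by linarith
  have N0ge2: "N0 \<ge> 2" unfolding N0_def by simp
  have A0nn: "A0 \<ge> 0" using N0ge2 by (simp add: A0_def)
  have p0pos: "p0 > 0" by (simp add: p0_def phi_pos)
  have p0le: "p0 \<le> 1" by (simp add: p0_def phi_le1)
  show ?thesis
  proof (rule exI[of _ "N0 + S0"], intro allI impI)
    fix n N s \<theta> \<tau> E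
    assume n: "N0 + S0 \<le> n" and nN: "n = N + s" and th0: "\<theta> > 0"
      and thL: "\<theta> < sqrt (ln (real N) / real m)"
      and E1: "E \<ge> measure Gm {..(\<tau> - \<theta>) * sqrt (2*m)}"
      and E2: "E \<ge> 1 - (measure Gm {..\<tau> * sqrt (2*m)})^N"
      and E3: "E \<ge> 1 - (measure Gm {(\<tau> - \<theta>) * sqrt (2*m)<..})^s"
    define r where "r = sqrt (2 * real m)"
    define a where "a = \<theta> * r"
    define x where "x = \<tau> * r"
    define L where "L = sqrt (2 * ln (real N))"
    have r0: "r > 0" using m1 by (simp add: r_def)
    have xa: "(\<tau> - \<theta>) * sqrt (2*m) = x - a" by (simp add: x_def a_def r_def algebra_simps)
    have xx: "\<tau> * sqrt (2*m) = x" by (simp add: x_def r_def)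
    have "sqrt (ln (real N) / real m) > 0" using th0 thL by linarith
    then have lnpos: "ln (real N) > 0" using m1 by (simp add: zero_less_divide_iff)
    have Npos: "N > 0" using lnpos by (cases "N = 0") auto
    have aL: "a < L"
    proof -
      have eq2: "ln (real N) / real m * (2 * real m) = 2 * ln (real N)" using m1 by (simp add: field_simps)
      have "a < sqrt (ln (real N) / real m) * r" unfolding a_def using thL r0 by (rule mult_strict_right_mono)
      also have "\<dots> = sqrt (ln (real N) / real m * (2 * real m))" by (simp only: r_def real_sqrt_mult)
      also have "\<dots> = L" unfolding eq2 by (simp add: L_def)
      finally show ?thesis .
    qed
    have Lnn: "L \<ge> 0" using lnpos by (simp add: L_def)
    show "E \<ge> 1/2 - c"
    proof (cases "x < 0")
      case True
      have F: "measure Gm {..x} \<le> 1/2" by (rule F_neg[OF True])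
      have "(measure Gm {..x})^N \<le> (measure Gm {..x})^1"
        using Npos by (intro power_decreasing) (auto simp: Gm_le1)
      then show ?thesis using E2 F c unfolding xx by simp
    next
      case xnn: False
      show ?thesis
      proof (cases "x \<ge> a - c")
        case True
        have "measure Gm {..-c} \<le> measure Gm {..x - a}" using True by (intro F_mono) simp
        then show ?thesis using E1 F_minus_c[of c] c unfolding xa by simp
      next
        case xlt: False
        show ?thesis
        proof (cases "N \<ge> N0")
          case True
          have "exp (L0\<^sup>2/2) \<le> real N" using N0ge True by linarith
          then have "exp (L0\<^sup>2/2) \<le> exp (ln (real N))" using Npos by simp
          then have "L0\<^sup>2/2 \<le> ln (real N)" by (simp only: exp_le_cancel_iff)
          then have "sqrt (L0\<^sup>2) \<le> L" unfolding L_def by (intro real_sqrt_le_mono) simp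
          then have LL0: "L \<ge> L0" using L0c c by simp
          then have Lc: "L \<ge> c" using L0c by simp
          define q1 where "q1 = (c/2) * std_normal_density (L - c/2)"
          have q1nn: "q1 \<ge> 0" using c by (simp add: q1_def)
          have "q1 \<le> measure Gm {L - c<..L - c/2}"
          proof -
            have "std_normal_density (L - c/2) * ((L - c/2) - (L - c)) \<le> measure Gm {L - c<..L - c/2}"
            proof (rule Gm_Ioc_lower)
              fix z assume z1: "L - c \<le> z" and z2: "z \<le> L - c/2"
              have "z\<^sup>2 \<le> (L - c/2)\<^sup>2" using z1 z2 Lc by (intro power_mono) auto
              then show "std_normal_density (L - c/2) \<le> std_normal_density z" by (rule phi_ge)
            qed (use c in auto)
            then show ?thesis by (simp add: q1_def algebra_simps)
          qed
          also have "\<dots> \<le> measure Gm {x<..}" using xlt aL by (intro Gm_mono) auto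
          finally have q1Q: "q1 \<le> measure Gm {x<..}" .
          have q1le: "q1 \<le> 1" using q1Q Gm_le1[of "{x<..}"] by linarith
          have Lsq: "L\<^sup>2 = 2 * ln (real N)" unfolding L_def using lnpos by simp
          define W where "W = c * L / 2 - c\<^sup>2/8"
          have ex: "(L - c/2)\<^sup>2 / 2 = ln (real N) - W"
          proof -
            have "(L - c/2)\<^sup>2 / 2 = L\<^sup>2/2 - W" by (simp add: W_def power2_eq_square field_simps)
            then show ?thesis using Lsq by simp
          qed
          have phiv: "std_normal_density (L - c/2) = (1 / sqrt (2*pi)) * (exp W / real N)"
          proof -
            have "exp (- (L - c/2)\<^sup>2 / 2) = exp (W - ln (real N))" using ex
              by (metis minus_diff_eq minus_divide_left)
            also have "\<dots> = exp W / real N" using Npos by (simp add: exp_diff)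
            finally show ?thesis by (simp add: std_normal_density_def)
          qed
          have Nq1: "real N * q1 = (c / (2 * sqrt (2*pi))) * exp W"
            unfolding q1_def phiv using Npos by (simp add: field_simps)
          have Wge: "W \<ge> ln (6/c)"
          proof -
            have "(c/2) * L \<ge> (c/2) * ((2/c) * (c\<^sup>2/8 + \<bar>ln (6/c)\<bar>))"
              using LL0 L0b c by (intro mult_left_mono) auto
            moreover have "(c/2) * ((2/c) * (c\<^sup>2/8 + \<bar>ln (6/c)\<bar>)) = c\<^sup>2/8 + \<bar>ln (6/c)\<bar>" using c by simp
            ultimately have "(c/2) * L \<ge> c\<^sup>2/8 + \<bar>ln (6/c)\<bar>" by simp
            then show ?thesis unfolding W_def by linarith
          qed
          have eW: "exp W \<ge> 6/c"
          proof -
            have "exp (ln (6/c)) \<le> exp W" using Wge by simp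
            then show ?thesis using c by simp
          qed
          have sp: "sqrt (2*pi) \<le> 3"
          proof -
            have "2*pi \<le> 3\<^sup>2" using pi_less_4 by simp
            then have "sqrt (2*pi) \<le> sqrt (3\<^sup>2)" by (rule real_sqrt_le_mono)
            then show ?thesis by simp
          qed
          have cc: "c / (2 * sqrt (2*pi)) \<ge> c / 6"
            using sp c by (intro divide_left_mono) auto
          have "real N * q1 \<ge> (c/6) * (6/c)"
            unfolding Nq1 using cc eW c by (intro mult_mono) auto
          then have Nq1ge: "real N * q1 \<ge> 1" using c by simp
          have Fx: "measure Gm {..x} \<le> 1 - q1" using Gm_compl[of x] q1Q by linarith
          have "(measure Gm {..x})^N \<le> (1 - q1)^N" using Fx by (intro power_mono) auto
          also have "\<dots> \<le> 1/2" by (rule pow_half[OF q1nn q1le Nq1ge])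
          finally show ?thesis using E2 c unfolding xx by simp
        next
          case False
          have "ln (real N) \<le> ln (real N0)" using False Npos by simp
          then have LA: "L \<le> A0" unfolding L_def A0_def by simp
          have Fp: "p0 \<le> measure Gm {..-A0}"
          proof -
            have "p0 * (-A0 - (-A0 - 1)) \<le> measure Gm {-A0-1<..-A0}"
            proof (rule Gm_Ioc_lower)
              fix z assume z1: "-A0 - 1 \<le> z" and z2: "z \<le> -A0"
              have "(-z)\<^sup>2 \<le> (A0 + 1)\<^sup>2" using z1 z2 A0nn by (intro power_mono) auto
              then show "p0 \<le> std_normal_density z" unfolding p0_def by (intro phi_ge) simp
            qed (use p0pos in auto)
            also have "\<dots> \<le> measure Gm {..-A0}" by (intro Gm_mono) auto
            finally show ?thesis by simp
          qed
          have "-A0 \<le> x - a" using xnn aL LA by linarith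
          then have "measure Gm {x - a<..} \<le> measure Gm {-A0<..}" by (rule Q_mono)
          also have "\<dots> \<le> 1 - p0" using Gm_compl[of "-A0"] Fp by linarith
          finally have Qb: "measure Gm {x - a<..} \<le> 1 - p0" .
          have sS0: "s \<ge> S0" using n nN False by linarith
          have h1: "real s * p0 \<ge> real S0 * p0" using sS0 p0pos by (intro mult_right_mono) auto
          have "real S0 \<ge> 1/p0" unfolding S0_def by linarith
          then have "real S0 * p0 \<ge> (1/p0) * p0" using p0pos by (intro mult_right_mono) auto
          then have "real S0 * p0 \<ge> 1" using p0pos by simp
          then have sp0: "real s * p0 \<ge> 1" using h1 by linarith
          have "(measure Gm {x - a<..})^s \<le> (1 - p0)^s" using Qb by (intro power_mono) auto
          also have "\<dots> \<le> 1/2" by (rule pow_half[OF less_imp_le[OF p0pos] p0le sp0])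
          finally show ?thesis using E3 c unfolding xa by simp
        qed
      qed
    qed
  qed
qed




lemma indep_coords:
  assumes P: "\<And>k. k \<in> K \<Longrightarrow> prob_space (Mf k)" and K: "K \<noteq> {}"
  shows "prob_space.indep_vars (PiM K Mf) Mf (\<lambda>k y. y k) K"
proof -
  interpret prob_space "PiM K Mf" by (rule prob_space_PiM) (rule P)
  define M' where "M' k = (if k \<in> K then Mf k else count_space UNIV)" for k
  define X where "X k = (\<lambda>y::'a \<Rightarrow> 'b. if k \<in> K then y k else undefined)" for k
  have rv: "random_variable (M' k) (X k)" for k
    by (cases "k \<in> K") (auto simp: M'_def X_def)
  have "indep_vars M' X K"
  proof (subst indep_vars_iff_distr_eq_PiM[OF K rv])
    have "distr (PiM K Mf) (\<Pi>\<^sub>M i\<in>K. M' i) (\<lambda>x. \<lambda>i\<in>K. X i x) = distr (PiM K Mf) (PiM K Mf) (\<lambda>x. x)"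
      by (rule distr_cong) (auto simp: M'_def X_def space_PiM PiE_def extensional_def intro!: sets_PiM_cong ext)
    also have "\<dots> = PiM K Mf" by simp
    also have "\<dots> = (\<Pi>\<^sub>M i\<in>K. distr (PiM K Mf) (M' i) (X i))"
    proof (rule PiM_cong)
      fix i assume i: "i \<in> K"
      have "distr (PiM K Mf) (M' i) (X i) = distr (PiM K Mf) (Mf i) (\<lambda>y. y i)"
        by (rule distr_cong) (auto simp: M'_def X_def i)
      also have "\<dots> = Mf i" by (rule distr_PiM_component[OF P i])
      finally show "Mf i = distr (PiM K Mf) (M' i) (X i)" by simp
    qed simp
    finally show "distr (PiM K Mf) (\<Pi>\<^sub>M i\<in>K. M' i) (\<lambda>x. \<lambda>i\<in>K. X i x) = (\<Pi>\<^sub>M i\<in>K. distr (PiM K Mf) (M' i) (X i))" .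
  qed
  then show ?thesis
    by (rule indep_vars_cong[THEN iffD1, rotated 3]) (auto simp: M'_def X_def)
qed

lemma sum_block: "(\<Sum>k\<in>{i}\<times>J. y k) = (\<Sum>j\<in>J. y (i, j))"
proof -
  have "{i}\<times>J = (\<lambda>j. (i,j)) ` J" by auto
  then show ?thesis by (simp add: sum.reindex inj_on_def)
qed


context
  fixes m n :: nat and S :: "nat set" and \<theta> :: real
  assumes m1: "m \<ge> 1"
begin

definition "mu i = (if i \<in> S then \<theta> else 0)"
definition "KK = {1..n} \<times> {1..2*m}"
definition "Mf = (\<lambda>ij::nat\<times>nat. density lborel (normal_density (mu (fst ij)) 1))"

lemma M_eq: "obs_model m S \<theta> n = PiM KK Mf"
  unfolding obs_model_def KK_def Mf_def mu_def
  apply (rule PiM_cong) apply simp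
  apply (simp only: fst_conv)
  done

lemma Mf_prob: "prob_space (Mf k)"
  unfolding Mf_def by (rule prob_space_normal_density) simp

lemma M_prob: "prob_space (obs_model m S \<theta> n)"
  unfolding M_eq by (rule prob_space_PiM) (rule Mf_prob)

lemma coord_indep: "n \<ge> 1 \<Longrightarrow> prob_space.indep_vars (obs_model m S \<theta> n) Mf (\<lambda>k y. y k) KK"
  unfolding M_eq by (rule indep_coords) (use m1 in \<open>auto simp: Mf_prob KK_def\<close>)

lemma coord_distr: "k \<in> KK \<Longrightarrow> distributed (obs_model m S \<theta> n) lborel (\<lambda>y. y k) (normal_density (mu (fst k)) 1)"
proof -
  assume k: "k \<in> KK"
  have "distr (PiM KK Mf) lborel (\<lambda>y. y k) = distr (PiM KK Mf) (Mf k) (\<lambda>y. y k)"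
    by (rule distr_cong) (auto simp: Mf_def)
  also have "\<dots> = Mf k" by (rule distr_PiM_component[OF Mf_prob k])
  moreover have "(\<lambda>y. y k) \<in> measurable (PiM KK Mf) (Mf k)"
    by (rule measurable_component_singleton[OF k])
  moreover have "measurable (PiM KK Mf) (Mf k) = measurable (PiM KK Mf) lborel"
    by (rule measurable_cong_sets) (auto simp: Mf_def)
  ultimately show ?thesis unfolding M_eq distributed_def
    by (auto simp: Mf_def)
qed


lemma T_std:
  assumes i: "i \<in> {1..n}"
  shows "distributed (obs_model m S \<theta> n) lborel (\<lambda>y. (avg_stat m y i - mu i) * sqrt (2*m)) std_normal_density"
proof -
  interpret prob_space "obs_model m S \<theta> n" by (rule M_prob)
  let ?B = "{i} \<times> {1..2*m}"
  have B: "?B \<subseteq> KK" using i by (auto simp: KK_def)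
  have n1: "n \<ge> 1" using i by auto
  have ind0: "indep_vars Mf (\<lambda>k y. y k) ?B"
    by (rule indep_vars_subset[OF coord_indep[OF n1] B])
  have ind: "indep_vars (\<lambda>_. borel) (\<lambda>k y. y k) ?B"
    using ind0 unfolding indep_vars_def2
    by (simp add: Mf_def cong: measurable_cong_sets)
  have Bne: "?B \<noteq> {}" using m1 by auto
  have sd: "distributed (obs_model m S \<theta> n) lborel (\<lambda>y. \<Sum>k\<in>?B. y k)
      (normal_density (\<Sum>k\<in>?B. mu i) (sqrt (\<Sum>k\<in>?B. 1\<^sup>2)))"
    by (rule sum_indep_normal[OF _ Bne ind]) (use B coord_distr[of "(i, _)"] in \<open>force+\<close>)
  have cB: "card ?B = 2*m" by (simp add: card_cartesian_product)
  have sd': "distributed (obs_model m S \<theta> n) lborel (\<lambda>y. \<Sum>k\<in>?B. y k)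
      (normal_density (2*m*mu i) (sqrt (2*m)))"
    using sd by (simp add: cB)
  define a where "a = sqrt (2*m) / (2*m)"
  have a0: "a \<noteq> 0" using m1 by (simp add: a_def)
  have sq0: "sqrt (2*real m) > 0" using m1 by simp
  have af: "distributed (obs_model m S \<theta> n) lborel (\<lambda>y. (- mu i * sqrt (2*m)) + a * (\<Sum>k\<in>?B. y k))
      (normal_density ((- mu i * sqrt (2*m)) + a * (2*m*mu i)) (\<bar>a\<bar> * sqrt (2*m)))"
    by (rule normal_density_affine[OF sd' _ a0]) (use sq0 in simp)
  have p1: "(- mu i * sqrt (2*m)) + a * (2*m*mu i) = 0"
    using m1 by (simp add: a_def)
  have p2: "\<bar>a\<bar> * sqrt (2*m) = 1"
    using m1 sq0 by (simp add: a_def abs_of_pos)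
  have fe: "(\<lambda>y. (- mu i * sqrt (2*m)) + a * (\<Sum>k\<in>?B. y k)) = (\<lambda>y. (avg_stat m y i - mu i) * sqrt (2*m))"
  proof
    fix y :: "nat\<times>nat \<Rightarrow> real"
    have "(\<Sum>k\<in>?B. y k) = (\<Sum>j=1..2*m. y (i,j))" by (rule sum_block)
    then show "(- mu i * sqrt (2*m)) + a * (\<Sum>k\<in>?B. y k) = (avg_stat m y i - mu i) * sqrt (2*m)"
      using m1 by (simp add: avg_stat_def a_def field_simps)
  qed
  show ?thesis using af unfolding p1 p2 fe .
qed


lemma T_indep:
  assumes n1: "n \<ge> 1"
  shows "prob_space.indep_vars (obs_model m S \<theta> n) (\<lambda>_. borel) (\<lambda>i y. avg_stat m y i) {1..n}"
proof -
  interpret prob_space "obs_model m S \<theta> n" by (rule M_prob)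
  define B where "B i = {i} \<times> {1..2*m}" for i :: nat
  have r: "indep_vars (\<lambda>i. PiM (B i) Mf) (\<lambda>i \<omega>. restrict (\<lambda>k. \<omega> k) (B i)) {1..n}"
    by (rule indep_vars_restrict[OF coord_indep[OF n1]])
       (auto simp: B_def KK_def disjoint_family_on_def)
  define Y where "Y i z = (1 / (2 * real m)) * (\<Sum>j = 1..2*m. z (i, j))" for i and z :: "nat\<times>nat \<Rightarrow> real"
  have meas: "Y i \<in> borel_measurable (PiM (B i) Mf)" for i
  proof -
    have c: "(\<lambda>z. z (i,j)) \<in> borel_measurable (PiM (B i) Mf)" if j: "j \<in> {1..2*m}" for j
    proof -
      have "(\<lambda>z. z (i,j)) \<in> measurable (PiM (B i) Mf) (Mf (i,j))"
        by (rule measurable_component_singleton) (use j in \<open>auto simp: B_def\<close>)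
      moreover have "measurable (PiM (B i) Mf) (Mf (i,j)) = measurable (PiM (B i) Mf) borel"
        by (rule measurable_cong_sets) (auto simp: Mf_def)
      ultimately show ?thesis by simp
    qed
    show ?thesis unfolding Y_def
      by (intro borel_measurable_times borel_measurable_const borel_measurable_sum c) auto
  qed
  have c2: "indep_vars (\<lambda>_. borel) (\<lambda>i x. Y i (restrict (\<lambda>k. x k) (B i))) {1..n}"
    by (rule indep_vars_compose2[OF r meas])
  show ?thesis
  proof (rule indep_vars_cong[THEN iffD1, OF _ _ _ c2])
    fix i assume "i \<in> {1..n}"
    show "(\<lambda>x. Y i (restrict (\<lambda>k. x k) (B i))) = (\<lambda>y. avg_stat m y i)"
      by (auto simp: Y_def B_def avg_stat_def intro!: ext sum.cong)
  qed auto
qed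


lemma avg_meas: "n \<ge> 1 \<Longrightarrow> i \<in> {1..n} \<Longrightarrow> (\<lambda>y. avg_stat m y i) \<in> borel_measurable (obs_model m S \<theta> n)"
proof -
  assume n1: "n \<ge> 1" and i: "i \<in> {1..n}"
  have "(\<forall>i\<in>{1..n}. (\<lambda>y. avg_stat m y i) \<in> measurable (obs_model m S \<theta> n) borel)"
    using T_indep[OF n1] unfolding prob_space.indep_vars_def2[OF M_prob] by (rule conjunct1)
  then show ?thesis using i by simp
qed

lemma T_le:
  assumes i: "i \<in> {1..n}"
  shows "measure (obs_model m S \<theta> n) {y \<in> space (obs_model m S \<theta> n). avg_stat m y i \<le> \<tau>}
       = measure Gm {..(\<tau> - mu i) * sqrt (2*m)}"
proof -
  let ?M = "obs_model m S \<theta> n"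
  let ?Z = "\<lambda>y. (avg_stat m y i - mu i) * sqrt (2*m)"
  have sq0: "sqrt (2*real m) > 0" using m1 by simp
  have e: "(avg_stat m y i \<le> \<tau>) \<longleftrightarrow> ?Z y \<in> {..(\<tau> - mu i) * sqrt (2*m)}" for y
    using mult_le_cancel_right_pos[OF sq0, of "avg_stat m y i - mu i" "\<tau> - mu i"] mult_le_cancel_right_pos[OF sq0, of "\<tau> - mu i" "avg_stat m y i - mu i"] by auto
  have se: "{y \<in> space ?M. avg_stat m y i \<le> \<tau>} = ?Z -` {..(\<tau> - mu i) * sqrt (2*m)} \<inter> space ?M"
    using e by blast
  have d: "emeasure ?M (?Z -` {..(\<tau> - mu i) * sqrt (2*m)} \<inter> space ?M) = (\<integral>\<^sup>+x. ennreal (std_normal_density x) * indicator {..(\<tau> - mu i) * sqrt (2*m)} x \<partial>lborel)"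
    by (rule distributed_emeasure[OF T_std[OF i]]) simp
  have g: "emeasure Gm {..(\<tau> - mu i) * sqrt (2*m)} = (\<integral>\<^sup>+x. ennreal (std_normal_density x) * indicator {..(\<tau> - mu i) * sqrt (2*m)} x \<partial>lborel)"
    unfolding Gm_def by (rule emeasure_density) simp_all
  have "emeasure ?M {y \<in> space ?M. avg_stat m y i \<le> \<tau>} = emeasure Gm {..(\<tau> - mu i) * sqrt (2*m)}"
    unfolding se d g ..
  then show ?thesis by (simp add: measure_def)
qed

lemma T_gt:
  assumes i: "i \<in> {1..n}"
  shows "measure (obs_model m S \<theta> n) {y \<in> space (obs_model m S \<theta> n). avg_stat m y i > \<tau>}
       = measure Gm {(\<tau> - mu i) * sqrt (2*m)<..}"
proof -
  let ?M = "obs_model m S \<theta> n"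
  let ?Z = "\<lambda>y. (avg_stat m y i - mu i) * sqrt (2*m)"
  have sq0: "sqrt (2*real m) > 0" using m1 by simp
  have e: "(avg_stat m y i > \<tau>) \<longleftrightarrow> ?Z y \<in> {(\<tau> - mu i) * sqrt (2*m)<..}" for y
    using mult_less_cancel_right_pos[OF sq0, of "avg_stat m y i - mu i" "\<tau> - mu i"] mult_less_cancel_right_pos[OF sq0, of "\<tau> - mu i" "avg_stat m y i - mu i"] by auto
  have se: "{y \<in> space ?M. avg_stat m y i > \<tau>} = ?Z -` {(\<tau> - mu i) * sqrt (2*m)<..} \<inter> space ?M"
    using e by blast
  have d: "emeasure ?M (?Z -` {(\<tau> - mu i) * sqrt (2*m)<..} \<inter> space ?M) = (\<integral>\<^sup>+x. ennreal (std_normal_density x) * indicator {(\<tau> - mu i) * sqrt (2*m)<..} x \<partial>lborel)"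
    by (rule distributed_emeasure[OF T_std[OF i]]) simp
  have g: "emeasure Gm {(\<tau> - mu i) * sqrt (2*m)<..} = (\<integral>\<^sup>+x. ennreal (std_normal_density x) * indicator {(\<tau> - mu i) * sqrt (2*m)<..} x \<partial>lborel)"
    unfolding Gm_def by (rule emeasure_density) simp_all
  have "emeasure ?M {y \<in> space ?M. avg_stat m y i > \<tau>} = emeasure Gm {(\<tau> - mu i) * sqrt (2*m)<..}"
    unfolding se d g ..
  then show ?thesis by (simp add: measure_def)
qed


lemma err_sets:
  assumes n1: "n \<ge> 1" and Ssub: "S \<subseteq> {1..n}"
  shows "{y \<in> space (obs_model m S \<theta> n). thresh_support m n \<tau> y \<noteq> S} \<in> sets (obs_model m S \<theta> n)"
proof -
  let ?M = "obs_model m S \<theta> n"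
  have e: "{y \<in> space ?M. thresh_support m n \<tau> y \<noteq> S} =
     (\<Union>i\<in>{1..n}. {y \<in> space ?M. (avg_stat m y i > \<tau>) \<noteq> (i \<in> S)})"
    using Ssub by (auto simp: thresh_support_def)
  have "{y \<in> space ?M. (avg_stat m y i > \<tau>) \<noteq> (i \<in> S)} \<in> sets ?M" if i: "i \<in> {1..n}" for i
  proof -
    have am: "(\<lambda>y. avg_stat m y i) \<in> borel_measurable ?M" by (rule avg_meas[OF n1 i])
    show ?thesis using am by measurable
  qed
  then show ?thesis unfolding e by blast
qed

lemma err_ge_single:
  assumes n1: "n \<ge> 1" and Ssub: "S \<subseteq> {1..n}" and iS: "i \<in> S"
  shows "measure Gm {..(\<tau> - \<theta>) * sqrt (2*m)} \<le> err_prob m S \<theta> n \<tau>"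
proof -
  let ?M = "obs_model m S \<theta> n"
  interpret prob_space ?M by (rule M_prob)
  have i: "i \<in> {1..n}" using iS Ssub by auto
  have "measure Gm {..(\<tau> - \<theta>) * sqrt (2*m)} = prob {y \<in> space ?M. avg_stat m y i \<le> \<tau>}"
    using T_le[OF i, of \<tau>] iS by (simp add: mu_def)
  also have "\<dots> \<le> prob {y \<in> space ?M. thresh_support m n \<tau> y \<noteq> S}"
    by (rule finite_measure_mono[OF _ err_sets[OF n1 Ssub]]) (use iS in \<open>auto simp: thresh_support_def\<close>)
  finally show ?thesis unfolding err_prob_def .
qed

lemma inter_ev:
  assumes n1: "n \<ge> 1" and J: "J \<subseteq> {1..n}" "J \<noteq> {}" and A: "A \<in> sets borel"
  shows "(\<Inter>i\<in>J. (\<lambda>y. avg_stat m y i) -` A \<inter> space (obs_model m S \<theta> n)) \<in> sets (obs_model m S \<theta> n)"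
proof (rule sets.finite_INT)
  show "finite J" using J finite_subset by blast
  show "J \<noteq> {}" by fact
  fix i assume "i \<in> J"
  then have i: "i \<in> {1..n}" using J by auto
  show "(\<lambda>y. avg_stat m y i) -` A \<inter> space (obs_model m S \<theta> n) \<in> sets (obs_model m S \<theta> n)"
    by (rule measurable_sets[OF avg_meas[OF n1 i] A])
qed

lemma err_ge_null:
  assumes n1: "n \<ge> 1" and Ssub: "S \<subseteq> {1..n}" and ne: "{1..n} - S \<noteq> {}"
  shows "1 - (measure Gm {..\<tau> * sqrt (2*m)}) ^ (n - card S) \<le> err_prob m S \<theta> n \<tau>"
proof -
  let ?M = "obs_model m S \<theta> n"
  let ?J = "{1..n} - S"
  interpret prob_space ?M by (rule M_prob)
  have Es: "{y \<in> space ?M. thresh_support m n \<tau> y \<noteq> S} \<in> events" by (rule err_sets[OF n1 Ssub])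
  have C: "space ?M - {y \<in> space ?M. thresh_support m n \<tau> y \<noteq> S} \<subseteq> (\<Inter>i\<in>?J. (\<lambda>y. avg_stat m y i) -` {..\<tau>} \<inter> space ?M)"
    using ne by (auto simp: thresh_support_def)
  have "prob (space ?M - {y \<in> space ?M. thresh_support m n \<tau> y \<noteq> S}) \<le> prob (\<Inter>i\<in>?J. (\<lambda>y. avg_stat m y i) -` {..\<tau>} \<inter> space ?M)"
    by (rule finite_measure_mono[OF C]) (rule inter_ev[OF n1 _ ne], auto)
  also have "\<dots> = (\<Prod>i\<in>?J. prob ((\<lambda>y. avg_stat m y i) -` {..\<tau>} \<inter> space ?M))"
    by (rule indep_varsD[OF T_indep[OF n1]]) (use ne in auto)
  also have "\<dots> = (\<Prod>i\<in>?J. measure Gm {..\<tau> * sqrt (2*m)})"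
  proof (rule prod.cong[OF refl])
    fix i assume i: "i \<in> ?J"
    have "(\<lambda>y. avg_stat m y i) -` {..\<tau>} \<inter> space ?M = {y \<in> space ?M. avg_stat m y i \<le> \<tau>}" by auto
    then show "prob ((\<lambda>y. avg_stat m y i) -` {..\<tau>} \<inter> space ?M) = measure Gm {..\<tau> * sqrt (2*m)}"
      using T_le[of i \<tau>] i by (simp add: mu_def)
  qed
  also have "\<dots> = (measure Gm {..\<tau> * sqrt (2*m)}) ^ (n - card S)"
    using Ssub by (simp add: card_Diff_subset finite_subset)
  finally show ?thesis using prob_compl[OF Es] unfolding err_prob_def by simp
qed

lemma err_ge_sig:
  assumes n1: "n \<ge> 1" and Ssub: "S \<subseteq> {1..n}" and ne: "S \<noteq> {}"
  shows "1 - (measure Gm {(\<tau> - \<theta>) * sqrt (2*m)<..}) ^ (card S) \<le> err_prob m S \<theta> n \<tau>"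
proof -
  let ?M = "obs_model m S \<theta> n"
  interpret prob_space ?M by (rule M_prob)
  have fS: "finite S" using Ssub finite_subset by blast
  have Es: "{y \<in> space ?M. thresh_support m n \<tau> y \<noteq> S} \<in> events" by (rule err_sets[OF n1 Ssub])
  have C: "space ?M - {y \<in> space ?M. thresh_support m n \<tau> y \<noteq> S} \<subseteq> (\<Inter>i\<in>S. (\<lambda>y. avg_stat m y i) -` {\<tau><..} \<inter> space ?M)"
    using ne by (auto simp: thresh_support_def)
  have "prob (space ?M - {y \<in> space ?M. thresh_support m n \<tau> y \<noteq> S}) \<le> prob (\<Inter>i\<in>S. (\<lambda>y. avg_stat m y i) -` {\<tau><..} \<inter> space ?M)"
    by (rule finite_measure_mono[OF C]) (rule inter_ev[OF n1 Ssub ne], auto)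
  also have "\<dots> = (\<Prod>i\<in>S. prob ((\<lambda>y. avg_stat m y i) -` {\<tau><..} \<inter> space ?M))"
    by (rule indep_varsD[OF T_indep[OF n1]]) (use ne fS Ssub in auto)
  also have "\<dots> = (\<Prod>i\<in>S. measure Gm {(\<tau> - \<theta>) * sqrt (2*m)<..})"
  proof (rule prod.cong[OF refl])
    fix i assume i: "i \<in> S"
    have "(\<lambda>y. avg_stat m y i) -` {\<tau><..} \<inter> space ?M = {y \<in> space ?M. avg_stat m y i > \<tau>}" by auto
    then show "prob ((\<lambda>y. avg_stat m y i) -` {\<tau><..} \<inter> space ?M) = measure Gm {(\<tau> - \<theta>) * sqrt (2*m)<..}"
      using T_gt[of i \<tau>] i Ssub by (auto simp: mu_def)
  qed
  also have "\<dots> = (measure Gm {(\<tau> - \<theta>) * sqrt (2*m)<..}) ^ (card S)"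
    by simp
  finally show ?thesis using prob_compl[OF Es] unfolding err_prob_def by simp
qed

end

theorem corollary1:
  fixes m :: nat and S :: "nat \<Rightarrow> nat set" and \<theta> :: "nat \<Rightarrow> real"
  assumes m_pos: "m \<ge> 1"
    and supp: "\<And>n. n \<ge> 1 \<Longrightarrow> S n \<subseteq> {1..n}"
    and nonempty: "\<And>n. n \<ge> 1 \<Longrightarrow> S n \<noteq> {}"
    and theta_pos: "\<And>n. n \<ge> 1 \<Longrightarrow> \<theta> n > 0"
    and growth: "eventually (\<lambda>n. \<theta> n < sqrt (ln (real (n - card (S n))) / real m)) sequentially"
  shows "(1/2 :: ereal) \<le> liminf (\<lambda>n. ereal (INF \<tau>. err_prob m (S n) (\<theta> n) n \<tau>))"
proof -
  have ev: "eventually (\<lambda>n. 1/2 - c \<le> (INF \<tau>. err_prob m (S n) (\<theta> n) n \<tau>)) sequentially" if c: "c > 0" for c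
  proof -
    obtain n0 where n0: "\<forall>n N s \<theta> \<tau> E. n \<ge> n0 \<longrightarrow> n = N + s \<longrightarrow> \<theta> > 0 \<longrightarrow> \<theta> < sqrt (ln (real N) / real m) \<longrightarrow>
     E \<ge> measure Gm {..(\<tau> - \<theta>) * sqrt (2*m)} \<longrightarrow> E \<ge> 1 - (measure Gm {..\<tau> * sqrt (2*m)})^N \<longrightarrow>
     E \<ge> 1 - (measure Gm {(\<tau> - \<theta>) * sqrt (2*m)<..})^s \<longrightarrow> E \<ge> 1/2 - c"
      using core[OF c m_pos] by blast
    have "eventually (\<lambda>n. n \<ge> max n0 1) sequentially" by (rule eventually_ge_at_top)
    then show ?thesis using growth
    proof eventually_elim
      case (elim n)
      then have nn0: "n \<ge> n0" and n1: "n \<ge> 1" by auto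
      have Ssub: "S n \<subseteq> {1..n}" by (rule supp[OF n1])
      have Sne: "S n \<noteq> {}" by (rule nonempty[OF n1])
      have th0: "\<theta> n > 0" by (rule theta_pos[OF n1])
      have cardS: "card (S n) \<le> n"
        using card_mono[OF _ Ssub] by simp
      have Jne: "{1..n} - S n \<noteq> {}"
      proof
        assume "{1..n} - S n = {}"
        then have "S n = {1..n}" using Ssub by auto
        then have "n - card (S n) = 0" by simp
        then show False using elim th0 by simp
      qed
      obtain i where iS: "i \<in> S n" using Sne by blast
      show ?case
      proof (rule cINF_greatest)
        fix \<tau>
        have E1: "measure Gm {..(\<tau> - \<theta> n) * sqrt (2*m)} \<le> err_prob m (S n) (\<theta> n) n \<tau>"
          by (rule err_ge_single[OF m_pos n1 Ssub iS])
        have E2: "1 - (measure Gm {..\<tau> * sqrt (2*m)}) ^ (n - card (S n)) \<le> err_prob m (S n) (\<theta> n) n \<tau>"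
          by (rule err_ge_null[OF m_pos n1 Ssub Jne])
        have E3: "1 - (measure Gm {(\<tau> - \<theta> n) * sqrt (2*m)<..}) ^ (card (S n)) \<le> err_prob m (S n) (\<theta> n) n \<tau>"
          by (rule err_ge_sig[OF m_pos n1 Ssub Sne])
        have "n = (n - card (S n)) + card (S n)" using cardS by simp
        then show "1/2 - c \<le> err_prob m (S n) (\<theta> n) n \<tau>"
          using n0 nn0 th0 elim E1 E2 E3 by blast
      qed simp
    qed
  qed
  show ?thesis
    unfolding le_Liminf_iff
  proof (intro allI impI)
    fix y :: ereal assume y: "y < 1/2"
    show "eventually (\<lambda>n. y < ereal (INF \<tau>. err_prob m (S n) (\<theta> n) n \<tau>)) sequentially"
    proof (cases y)
      case (real r)
      have h: "(1/2::ereal) = ereal (1/2)" by (simp add: one_ereal_def numeral_eq_ereal)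
      then have r: "r < 1/2" using y real by simp
      have "eventually (\<lambda>n. 1/2 - (1/2 - r)/2 \<le> (INF \<tau>. err_prob m (S n) (\<theta> n) n \<tau>)) sequentially"
        by (rule ev) (use r in simp)
      then show ?thesis
      proof eventually_elim
        case (elim n)
        have "r < 1/2 - (1/2 - r)/2" using r by (simp add: field_simps)
        then have "r < (INF \<tau>. err_prob m (S n) (\<theta> n) n \<tau>)" using elim by (rule order.strict_trans2)
        then show ?case using real by simp
      qed
    next
      case PInf then show ?thesis using y by simp
    next
      case MInf then show ?thesis by simp
    qed
  qed
qed

end
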